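(* The metric space $(\mathcal M/\!\sim,d_{\mathrm{GH}})$ is a geodesic space: for any $[X],[Y]\in\mathcal M/\!\sim$ there exists a continuous curve $\gamma:[0,1]\to\mathcal M/\!\sim$ with $\gamma(0)=[X]$, $\gamma(1)=[Y]$ and $d_{\mathrm{GH}}(\gamma(s),\gamma(t))=|t-s|\,d_{\mathrm{GH}}([X],[Y])$ for all $s,t\in[0,1]$.
   Context: $\mathcal M$ is the collection of compact metric spaces; $X\sim Y$ iff $X$ and $Y$ are isometric, and $d_{\mathrm{GH}}([X],[Y]):=d_{\mathrm{GH}}(X,Y)$. Here $d_{\mathrm{GH}}(X,Y)=\tfrac12\inf_{R}\operatorname{dis}(R)$, the infimum over all correspondences $R\subseteq X\times Y$ (relations whose projections onto $X$ and $Y$ are surjective), with $\operatorname{dis}(R)=\sup_{(x,y),(x',y')\in R}|d_X(x,x')-d_Y(y,y')|$. *)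

theory Defs
  imports "HOL-Analysis.Analysis"
begin

definition compact_metric_space :: "'a set \<Rightarrow> ('a \<Rightarrow> 'a \<Rightarrow> real) \<Rightarrow> bool" where
  "compact_metric_space M d \<longleftrightarrow>
     Metric_space M d \<and> compact_space (Metric_space.mtopology M d) \<and> M \<noteq> {}"

definition isometric :: "'a set \<Rightarrow> ('a \<Rightarrow> 'a \<Rightarrow> real) \<Rightarrow> 'b set \<Rightarrow> ('b \<Rightarrow> 'b \<Rightarrow> real) \<Rightarrow> bool" where
  "isometric X dX Y dY \<longleftrightarrow>
     (\<exists>f. bij_betw f X Y \<and> (\<forall>x\<in>X. \<forall>x'\<in>X. dY (f x) (f x') = dX x x'))"

definition correspondence :: "'a set \<Rightarrow> 'b set \<Rightarrow> ('a \<times> 'b) set \<Rightarrow> bool" where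
  "correspondence X Y R \<longleftrightarrow> R \<subseteq> X \<times> Y \<and> fst ` R = X \<and> snd ` R = Y"

definition distortion :: "('a \<Rightarrow> 'a \<Rightarrow> real) \<Rightarrow> ('b \<Rightarrow> 'b \<Rightarrow> real) \<Rightarrow> ('a \<times> 'b) set \<Rightarrow> real" where
  "distortion dX dY R =
     (SUP p \<in> R \<times> R. \<bar>dX (fst (fst p)) (fst (snd p)) - dY (snd (fst p)) (snd (snd p))\<bar>)"

definition GH_dist :: "'a set \<Rightarrow> ('a \<Rightarrow> 'a \<Rightarrow> real) \<Rightarrow> 'b set \<Rightarrow> ('b \<Rightarrow> 'b \<Rightarrow> real) \<Rightarrow> real" where
  "GH_dist X dX Y dY = (1/2) * (INF R \<in> {R. correspondence X Y R}. distortion dX dY R)"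

end

theory Submission
  imports Defs
begin


definition bnd :: "'a set \<Rightarrow> ('a \<Rightarrow> 'a \<Rightarrow> real) \<Rightarrow> real \<Rightarrow> bool" where
  "bnd X d B \<longleftrightarrow> (\<forall>x\<in>X. \<forall>x'\<in>X. \<bar>d x x'\<bar> \<le> B)"

lemma dis_bdd:
  assumes "R \<subseteq> X \<times> Y" "bnd X dX A" "bnd Y dY B"
  shows "bdd_above ((\<lambda>p. \<bar>dX (fst (fst p)) (fst (snd p)) - dY (snd (fst p)) (snd (snd p))\<bar>) ` (R \<times> R))"
proof (rule bdd_aboveI2)
  fix p assume "p \<in> R \<times> R"
  then have "fst (fst p) \<in> X" "fst (snd p) \<in> X" "snd (fst p) \<in> Y" "snd (snd p) \<in> Y"
    using assms(1) by auto
  then show "\<bar>dX (fst (fst p)) (fst (snd p)) - dY (snd (fst p)) (snd (snd p))\<bar> \<le> A + B"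
    using assms(2,3) unfolding bnd_def by fastforce
qed

lemma dis_upper:
  assumes "R \<subseteq> X \<times> Y" "bnd X dX A" "bnd Y dY B" "(x,y) \<in> R" "(x',y') \<in> R"
  shows "\<bar>dX x x' - dY y y'\<bar> \<le> distortion dX dY R"
proof -
  have "\<bar>dX x x' - dY y y'\<bar> = (\<lambda>p. \<bar>dX (fst (fst p)) (fst (snd p)) - dY (snd (fst p)) (snd (snd p))\<bar>) ((x,y),(x',y'))"
    by simp
  also have "\<dots> \<le> distortion dX dY R"
    unfolding distortion_def
    by (rule cSUP_upper[OF _ dis_bdd[OF assms(1-3)]]) (use assms(4,5) in auto)
  finally show ?thesis .
qed

lemma dis_least:
  assumes "R \<noteq> {}" "\<And>x y x' y'. (x,y) \<in> R \<Longrightarrow> (x',y') \<in> R \<Longrightarrow> \<bar>dX x x' - dY y y'\<bar> \<le> c"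
  shows "distortion dX dY R \<le> c"
  unfolding distortion_def
  by (rule cSUP_least) (use assms in auto)

lemma dis_nonneg:
  assumes "R \<subseteq> X \<times> Y" "bnd X dX A" "bnd Y dY B" "R \<noteq> {}"
  shows "0 \<le> distortion dX dY R"
proof -
  obtain x y where "(x,y) \<in> R" using assms(4) by auto
  then show ?thesis using dis_upper[OF assms(1-3), of x y x y] by linarith
qed

lemma corr_ne: "correspondence X Y R \<Longrightarrow> X \<noteq> {} \<Longrightarrow> R \<noteq> {}"
  unfolding correspondence_def by auto

lemma GH_bdd:
  assumes "X \<noteq> {}" "bnd X dX A" "bnd Y dY B"
  shows "bdd_below ((distortion dX dY) ` {R. correspondence X Y R})"
proof (rule bdd_belowI2)
  fix R assume "R \<in> {R. correspondence X Y R}"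
  then show "0 \<le> distortion dX dY R"
    using dis_nonneg[OF _ assms(2,3)] corr_ne[OF _ assms(1)] unfolding correspondence_def by auto
qed

lemma GH_le:
  assumes "X \<noteq> {}" "bnd X dX A" "bnd Y dY B" "correspondence X Y C"
  shows "GH_dist X dX Y dY \<le> distortion dX dY C / 2"
proof -
  have "(INF R \<in> {R. correspondence X Y R}. distortion dX dY R) \<le> distortion dX dY C"
    by (rule cINF_lower[OF GH_bdd[OF assms(1-3)]]) (use assms(4) in auto)
  then show ?thesis unfolding GH_dist_def by simp
qed

lemma corr_full: "X \<noteq> {} \<Longrightarrow> Y \<noteq> {} \<Longrightarrow> correspondence X Y (X \<times> Y)"
  unfolding correspondence_def by auto

lemma GH_greatest:
  assumes "X \<noteq> {}" "Y \<noteq> {}" "\<And>C. correspondence X Y C \<Longrightarrow> c \<le> distortion dX dY C"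
  shows "c \<le> 2 * GH_dist X dX Y dY"
proof -
  have "c \<le> (INF R \<in> {R. correspondence X Y R}. distortion dX dY R)"
  proof (rule cINF_greatest)
    show "{R. correspondence X Y R} \<noteq> {}" using corr_full[OF assms(1,2)] by blast
  qed (use assms(3) in auto)
  then show ?thesis unfolding GH_dist_def by simp
qed

lemma GH_approx:
  assumes "X \<noteq> {}" "Y \<noteq> {}" "e > 0"
  obtains C where "correspondence X Y C" "distortion dX dY C < 2 * GH_dist X dX Y dY + e"
proof -
  have "\<exists>C. correspondence X Y C \<and> distortion dX dY C < 2 * GH_dist X dX Y dY + e"
  proof (rule ccontr)
    assume "\<not> ?thesis"
    then have "2 * GH_dist X dX Y dY + e \<le> 2 * GH_dist X dX Y dY"
      by (intro GH_greatest[OF assms(1,2)]) (auto simp: not_less)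
    then show False using assms(3) by simp
  qed
  then show ?thesis using that by blast
qed

lemma GH_nonneg:
  assumes "X \<noteq> {}" "Y \<noteq> {}" "bnd X dX A" "bnd Y dY B"
  shows "0 \<le> GH_dist X dX Y dY"
proof -
  have "0 \<le> 2 * GH_dist X dX Y dY"
    by (rule GH_greatest[OF assms(1,2)])
       (use dis_nonneg[OF _ assms(3,4)] corr_ne[OF _ assms(1)] in \<open>auto simp: correspondence_def\<close>)
  then show ?thesis by simp
qed

lemma dis_converse: "distortion dY dX (converse R) = distortion dX dY R"
proof -
  let ?s = "\<lambda>p. (prod.swap (fst p), prod.swap (snd p))"
  have eq: "converse R \<times> converse R = ?s ` (R \<times> R)"
  proof (rule set_eqI, rule iffI)
    fix z assume "z \<in> converse R \<times> converse R"
    then obtain a b c d where z: "z = ((b,a),(d,c))" "(a,b) \<in> R" "(c,d) \<in> R"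
      by (cases z) auto
    show "z \<in> ?s ` (R \<times> R)"
      by (rule image_eqI[where x="((a,b),(c,d))"]) (use z in auto)
  next
    fix z assume "z \<in> ?s ` (R \<times> R)"
    then obtain a b c d where z: "z = ((b,a),(d,c))" "(a,b) \<in> R" "(c,d) \<in> R"
      by auto
    then show "z \<in> converse R \<times> converse R" by simp
  qed
  show ?thesis unfolding distortion_def eq image_comp
    by (rule arg_cong[where f=Sup], rule image_cong) (auto simp: abs_minus_commute)
qed

lemma corr_converse: "correspondence Y X (converse R) \<longleftrightarrow> correspondence X Y R"
  unfolding correspondence_def fst_eq_Domain snd_eq_Range by auto

lemma GH_sym: "GH_dist Y dY X dX = GH_dist X dX Y dY"
proof -
  have "{R. correspondence Y X R} = converse ` {R. correspondence X Y R}"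
  proof (rule set_eqI, rule iffI)
    fix R assume "R \<in> {R. correspondence Y X R}"
    then show "R \<in> converse ` {R. correspondence X Y R}"
      by (intro image_eqI[where x="converse R"]) (simp_all add: corr_converse)
  qed (auto simp: corr_converse)
  then show ?thesis unfolding GH_dist_def by (simp add: image_comp o_def dis_converse)
qed

lemma corr_comp:
  assumes "correspondence X Y R1" "correspondence Y Z R2"
  shows "correspondence X Z (R1 O R2)"
  unfolding correspondence_def
proof (intro conjI)
  show "R1 O R2 \<subseteq> X \<times> Z" using assms unfolding correspondence_def by blast
  show "fst ` (R1 O R2) = X"
  proof
    show "fst ` (R1 O R2) \<subseteq> X" using assms unfolding correspondence_def by force
    show "X \<subseteq> fst ` (R1 O R2)"
    proof
      fix x assume "x \<in> X"
      then obtain y where y: "(x,y) \<in> R1" using assms(1) unfolding correspondence_def by force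
      then have "y \<in> Y" using assms(1) unfolding correspondence_def by blast
      then obtain z where "(y,z) \<in> R2" using assms(2) unfolding correspondence_def by force
      then show "x \<in> fst ` (R1 O R2)" using y by (intro image_eqI[where x="(x,z)"]) auto
    qed
  qed
  show "snd ` (R1 O R2) = Z"
  proof
    show "snd ` (R1 O R2) \<subseteq> Z" using assms unfolding correspondence_def by force
    show "Z \<subseteq> snd ` (R1 O R2)"
    proof
      fix z assume "z \<in> Z"
      then obtain y where y: "(y,z) \<in> R2" using assms(2) unfolding correspondence_def by force
      then have "y \<in> Y" using assms(2) unfolding correspondence_def by blast
      then obtain x where "(x,y) \<in> R1" using assms(1) unfolding correspondence_def by force
      then show "z \<in> snd ` (R1 O R2)" using y by (intro image_eqI[where x="(x,z)"]) auto
    qed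
  qed
qed

lemma dis_comp:
  assumes "R1 \<subseteq> X \<times> Y" "R2 \<subseteq> Y \<times> Z" "bnd X dX A" "bnd Y dY B" "bnd Z dZ C" "R1 O R2 \<noteq> {}"
  shows "distortion dX dZ (R1 O R2) \<le> distortion dX dY R1 + distortion dY dZ R2"
proof (rule dis_least[OF assms(6)])
  fix x z x' z' assume "(x,z) \<in> R1 O R2" "(x',z') \<in> R1 O R2"
  then obtain y y' where "(x,y) \<in> R1" "(y,z) \<in> R2" "(x',y') \<in> R1" "(y',z') \<in> R2" by auto
  then have "\<bar>dX x x' - dY y y'\<bar> \<le> distortion dX dY R1" "\<bar>dY y y' - dZ z z'\<bar> \<le> distortion dY dZ R2"
    using dis_upper[OF assms(1,3,4)] dis_upper[OF assms(2,4,5)] by blast+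
  then show "\<bar>dX x x' - dZ z z'\<bar> \<le> distortion dX dY R1 + distortion dY dZ R2" by linarith
qed

lemma GH_tri:
  assumes "X \<noteq> {}" "Y \<noteq> {}" "Z \<noteq> {}" "bnd X dX A" "bnd Y dY B" "bnd Z dZ C"
  shows "GH_dist X dX Z dZ \<le> GH_dist X dX Y dY + GH_dist Y dY Z dZ"
proof (rule field_le_epsilon)
  fix e :: real assume e: "0 < e"
  obtain R1 where R1: "correspondence X Y R1" "distortion dX dY R1 < 2 * GH_dist X dX Y dY + e"
    using GH_approx[OF assms(1,2) e] by blast
  obtain R2 where R2: "correspondence Y Z R2" "distortion dY dZ R2 < 2 * GH_dist Y dY Z dZ + e"
    using GH_approx[OF assms(2,3) e] by blast
  have c: "correspondence X Z (R1 O R2)" using corr_comp[OF R1(1) R2(1)] .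
  have "GH_dist X dX Z dZ \<le> distortion dX dZ (R1 O R2) / 2"
    by (rule GH_le[OF assms(1,4,6) c])
  also have "\<dots> \<le> (distortion dX dY R1 + distortion dY dZ R2) / 2"
    using dis_comp[OF _ _ assms(4,5,6) corr_ne[OF c assms(1)]] R1(1) R2(1)
    unfolding correspondence_def by (simp add: divide_right_mono)
  finally have "2 * GH_dist X dX Z dZ \<le> distortion dX dY R1 + distortion dY dZ R2"
    by simp
  then show "GH_dist X dX Z dZ \<le> GH_dist X dX Y dY + GH_dist Y dY Z dZ + e"
    using R1(2) R2(2) by linarith
qed



lemma cont_dist:
  assumes "Metric_space Y dY"
    and "continuous_map T (Metric_space.mtopology Y dY) u" "continuous_map T (Metric_space.mtopology Y dY) v"
  shows "continuous_map T euclideanreal (\<lambda>p. dY (u p) (v p))"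
proof -
  interpret Metric_space Y dY by fact
  have "continuous_map T euclideanreal (\<lambda>p. mdist (metric(Y,dY)) (u p) (v p))"
    by (intro continuous_map_mdist) (use assms in simp_all)
  then show ?thesis by simp
qed

lemma closed_family:
  assumes "I \<noteq> {}" "\<And>i. i \<in> I \<Longrightarrow> continuous_map T euclideanreal (h i)"
  shows "closedin T {p \<in> topspace T. \<forall>i\<in>I. h i p \<le> c}"
proof -
  have "{p \<in> topspace T. \<forall>i\<in>I. h i p \<le> c} = (\<Inter>i\<in>I. {p \<in> topspace T. h i p \<in> {..c}})"
    using assms(1) by auto
  also have "closedin T \<dots>"
  proof (intro closedin_INT assms(1))
    fix i assume "i \<in> I"
    show "closedin T {p \<in> topspace T. h i p \<in> {..c}}"
      by (rule closedin_continuous_map_preimage[OF assms(2)[OF \<open>i \<in> I\<close>]]) (simp add: closed_atMost)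
  qed
  finally show ?thesis .
qed

lemma cms_bnd:
  assumes "compact_metric_space X dX"
  obtains B where "bnd X dX B"
proof -
  interpret Metric_space X dX using assms unfolding compact_metric_space_def by blast
  have "mbounded X"
    using assms compactin_imp_mbounded unfolding compact_metric_space_def compact_space_def by simp
  then obtain B where "\<forall>x\<in>X. \<forall>y\<in>X. dX x y \<le> B" by (auto simp: mbounded_alt)
  then have "bnd X dX B" by (simp add: bnd_def)
  then show ?thesis using that by blast
qed


lemma lim_le:
  fixes a b :: real
  assumes "\<And>n. a \<le> b + 1 / real (Suc n)"
  shows "a \<le> b"
proof (rule field_le_epsilon)
  fix e :: real assume "0 < e"
  then obtain n where "inverse (real (Suc n)) < e" using reals_Archimedean by blast
  then show "a \<le> b + e" using assms[of n] by (simp add: inverse_eq_divide)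
qed

lemma optimal_fg:
  assumes cX: "compact_metric_space X dX" and cY: "compact_metric_space Y dY"
  obtains f g where "\<forall>x\<in>X. f x \<in> Y" "\<forall>y\<in>Y. g y \<in> X"
    "\<forall>x\<in>X. \<forall>x'\<in>X. \<bar>dX x x' - dY (f x) (f x')\<bar> \<le> 2 * GH_dist X dX Y dY"
    "\<forall>y\<in>Y. \<forall>y'\<in>Y. \<bar>dX (g y) (g y') - dY y y'\<bar> \<le> 2 * GH_dist X dX Y dY"
    "\<forall>x\<in>X. \<forall>y\<in>Y. \<bar>dX x (g y) - dY (f x) y\<bar> \<le> 2 * GH_dist X dX Y dY"
proof -
  interpret MX: Metric_space X dX using cX unfolding compact_metric_space_def by blast
  interpret MY: Metric_space Y dY using cY unfolding compact_metric_space_def by blast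
  have Xne: "X \<noteq> {}" and Yne: "Y \<noteq> {}" using cX cY unfolding compact_metric_space_def by auto
  obtain A where bA: "bnd X dX A" using cms_bnd[OF cX] by blast
  obtain B where bB: "bnd Y dY B" using cms_bnd[OF cY] by blast
  define G where "G = GH_dist X dX Y dY"
  define c where "c n = 2 * G + 1 / real (Suc n)" for n
  define T1 where "T1 = product_topology (\<lambda>_. MY.mtopology) X"
  define T2 where "T2 = product_topology (\<lambda>_. MX.mtopology) Y"
  define T where "T = prod_topology T1 T2"
  define P where "P e p \<longleftrightarrow>
     (\<forall>x\<in>X. \<forall>x'\<in>X. \<bar>dX x x' - dY (fst p x) (fst p x')\<bar> \<le> e) \<and>
     (\<forall>y\<in>Y. \<forall>y'\<in>Y. \<bar>dX (snd p y) (snd p y') - dY y y'\<bar> \<le> e) \<and>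
     (\<forall>x\<in>X. \<forall>y\<in>Y. \<bar>dX x (snd p y) - dY (fst p x) y\<bar> \<le> e)" for e p
  define K where "K n = {p \<in> topspace T. P (c n) p}" for n
  have comp: "compact_space T"
    unfolding T_def T1_def T2_def
    using cX cY unfolding compact_metric_space_def
    by (simp add: compact_space_prod_topology compact_space_product_topology)
  have e1: "continuous_map T MY.mtopology (\<lambda>p. fst p x)" if "x \<in> X" for x
    using continuous_map_compose[OF continuous_map_fst continuous_map_product_projection[of x X "\<lambda>_. MY.mtopology"]] that
    by (simp add: o_def T_def T1_def)
  have e2: "continuous_map T MX.mtopology (\<lambda>p. snd p y)" if "y \<in> Y" for y
    using continuous_map_compose[OF continuous_map_snd continuous_map_product_projection[of y Y "\<lambda>_. MX.mtopology"]] that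
    by (simp add: o_def T_def T2_def)
  have closed: "closedin T (K n)" for n
  proof -
    have "K n = {p \<in> topspace T. \<forall>i\<in>X \<times> X. \<bar>dX (fst i) (snd i) - dY (fst p (fst i)) (fst p (snd i))\<bar> \<le> c n}
       \<inter> {p \<in> topspace T. \<forall>i\<in>Y \<times> Y. \<bar>dX (snd p (fst i)) (snd p (snd i)) - dY (fst i) (snd i)\<bar> \<le> c n}
       \<inter> {p \<in> topspace T. \<forall>i\<in>X \<times> Y. \<bar>dX (fst i) (snd p (snd i)) - dY (fst p (fst i)) (snd i)\<bar> \<le> c n}"
      unfolding K_def P_def by auto
    also have "closedin T \<dots>"
    proof (intro closedin_Int closed_family)
      fix i assume "i \<in> X \<times> X"
      then show "continuous_map T euclideanreal (\<lambda>p. \<bar>dX (fst i) (snd i) - dY (fst p (fst i)) (fst p (snd i))\<bar>)"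
        by (intro continuous_map_real_abs continuous_map_diff cont_dist[OF MY.Metric_space_axioms] e1) auto
    next
      fix i assume "i \<in> Y \<times> Y"
      then show "continuous_map T euclideanreal (\<lambda>p. \<bar>dX (snd p (fst i)) (snd p (snd i)) - dY (fst i) (snd i)\<bar>)"
        by (intro continuous_map_real_abs continuous_map_diff cont_dist[OF MX.Metric_space_axioms] e2) auto
    next
      fix i assume "i \<in> X \<times> Y"
      then show "continuous_map T euclideanreal (\<lambda>p. \<bar>dX (fst i) (snd p (snd i)) - dY (fst p (fst i)) (snd i)\<bar>)"
        by (intro continuous_map_real_abs continuous_map_diff cont_dist[OF MX.Metric_space_axioms]
              cont_dist[OF MY.Metric_space_axioms] e1 e2) auto
    qed (use Xne Yne in auto)
    finally show ?thesis .
  qed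
  have ne: "K n \<noteq> {}" for n
  proof -
    obtain R where R: "correspondence X Y R" "distortion dX dY R < 2 * G + 1 / real (Suc n)"
      using GH_approx[OF Xne Yne, of "1 / real (Suc n)"] unfolding G_def by auto
    have RXY: "R \<subseteq> X \<times> Y" using R(1) unfolding correspondence_def by auto
    define f where "f = restrict (\<lambda>x. SOME y. (x,y) \<in> R) X"
    define g where "g = restrict (\<lambda>y. SOME x. (x,y) \<in> R) Y"
    have f: "(x, f x) \<in> R" if "x \<in> X" for x
    proof -
      have "\<exists>y. (x,y) \<in> R" using that R(1) unfolding correspondence_def by force
      from someI_ex[OF this] show ?thesis unfolding f_def using that by simp
    qed
    have g: "(g y, y) \<in> R" if "y \<in> Y" for y
    proof -
      have "\<exists>x. (x,y) \<in> R" using that R(1) unfolding correspondence_def by force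
      from someI_ex[OF this] show ?thesis unfolding g_def using that by simp
    qed
    have "(f, g) \<in> topspace T"
      unfolding T_def T1_def T2_def using f g RXY
      by (auto simp: f_def g_def PiE_def extensional_def)
    moreover have "P (c n) (f, g)"
    proof -
      have le: "\<bar>dX x x' - dY y y'\<bar> \<le> c n" if "(x,y) \<in> R" "(x',y') \<in> R" for x x' y y'
        using dis_upper[OF RXY bA bB that] R(2) unfolding c_def by linarith
      show ?thesis unfolding P_def using le f g by simp
    qed
    ultimately show ?thesis unfolding K_def by blast
  qed
  have dec: "decseq K"
  proof (rule decseq_SucI)
    fix n
    have "c (Suc n) \<le> c n" unfolding c_def by (simp add: frac_le)
    then show "K (Suc n) \<subseteq> K n" unfolding K_def P_def by force
  qed
  obtain p where p: "p \<in> (\<Inter>n. K n)"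
    using compact_space_imp_nest[OF comp closed ne dec] by blast
  then have Pn: "P (c n) p" and pT: "p \<in> topspace T" for n unfolding K_def by auto
  have "P (2 * G) p"
    unfolding P_def
  proof (intro conjI ballI)
    fix x x' assume that_assms: "x \<in> X" "x' \<in> X"
    show "\<bar>dX x x' - dY (fst p x) (fst p x')\<bar> \<le> 2 * G" (is "?lhs \<le> _")
    proof (rule lim_le)
      fix n show "?lhs \<le> 2 * G + 1 / real (Suc n)" using Pn[of n] that_assms unfolding P_def c_def by simp
    qed
  next
    fix y y' assume that_assms: "y \<in> Y" "y' \<in> Y"
    show "\<bar>dX (snd p y) (snd p y') - dY y y'\<bar> \<le> 2 * G" (is "?lhs \<le> _")
    proof (rule lim_le)
      fix n show "?lhs \<le> 2 * G + 1 / real (Suc n)" using Pn[of n] that_assms unfolding P_def c_def by simp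
    qed
  next
    fix x y assume that_assms: "x \<in> X" "y \<in> Y"
    show "\<bar>dX x (snd p y) - dY (fst p x) y\<bar> \<le> 2 * G" (is "?lhs \<le> _")
    proof (rule lim_le)
      fix n show "?lhs \<le> 2 * G + 1 / real (Suc n)" using Pn[of n] that_assms unfolding P_def c_def by simp
    qed
  qed
  moreover have "\<forall>x\<in>X. fst p x \<in> Y" "\<forall>y\<in>Y. snd p y \<in> X"
    using pT unfolding T_def T1_def T2_def by (auto simp: PiE_def Pi_def mem_Times_iff)
  ultimately show ?thesis using that[of "fst p" "snd p"] unfolding P_def G_def by blast
qed



lemma optimal:
  assumes cX: "compact_metric_space X dX" and cY: "compact_metric_space Y dY"
  obtains R where "correspondence X Y R"
    "\<And>x y x' y'. (x,y) \<in> R \<Longrightarrow> (x',y') \<in> R \<Longrightarrow> \<bar>dX x x' - dY y y'\<bar> \<le> 2 * GH_dist X dX Y dY"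
    "\<And>x y. x \<in> X \<Longrightarrow> y \<in> Y \<Longrightarrow> (\<And>e. e > 0 \<Longrightarrow> \<exists>a b. (a,b) \<in> R \<and> dX x a < e \<and> dY y b < e) \<Longrightarrow> (x,y) \<in> R"
proof -
  interpret MX: Metric_space X dX using cX unfolding compact_metric_space_def by blast
  interpret MY: Metric_space Y dY using cY unfolding compact_metric_space_def by blast
  define G where "G = 2 * GH_dist X dX Y dY"
  obtain f g where fY: "\<forall>x\<in>X. f x \<in> Y" and gX: "\<forall>y\<in>Y. g y \<in> X"
    and b1: "\<forall>x\<in>X. \<forall>x'\<in>X. \<bar>dX x x' - dY (f x) (f x')\<bar> \<le> G"
    and b2: "\<forall>y\<in>Y. \<forall>y'\<in>Y. \<bar>dX (g y) (g y') - dY y y'\<bar> \<le> G"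
    and b3: "\<forall>x\<in>X. \<forall>y\<in>Y. \<bar>dX x (g y) - dY (f x) y\<bar> \<le> G"
    using optimal_fg[OF cX cY] unfolding G_def by blast
  define R0 where "R0 = (\<lambda>x. (x, f x)) ` X \<union> (\<lambda>y. (g y, y)) ` Y"
  have R0XY: "R0 \<subseteq> X \<times> Y" unfolding R0_def using fY gX by auto
  have R0b: "\<bar>dX a a' - dY b b'\<bar> \<le> G" if h: "(a,b) \<in> R0" "(a',b') \<in> R0" for a b a' b'
  proof -
    consider (xx) "a \<in> X" "b = f a" "a' \<in> X" "b' = f a'"
      | (xy) "a \<in> X" "b = f a" "b' \<in> Y" "a' = g b'"
      | (yx) "b \<in> Y" "a = g b" "a' \<in> X" "b' = f a'"
      | (yy) "b \<in> Y" "a = g b" "b' \<in> Y" "a' = g b'"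
      using h unfolding R0_def by blast
    then show ?thesis
    proof cases
      case xx then show ?thesis using b1 by simp
    next
      case xy then show ?thesis using b3 by simp
    next
      case yx then show ?thesis using b3 by (simp add: MX.commute MY.commute)
    next
      case yy then show ?thesis using b2 by simp
    qed
  qed
  define R where "R = {(x,y). x \<in> X \<and> y \<in> Y \<and> (\<forall>e>0. \<exists>a b. (a,b) \<in> R0 \<and> dX x a < e \<and> dY y b < e)}"
  have R0R: "R0 \<subseteq> R"
    unfolding R_def using R0XY by force
  have RXY: "R \<subseteq> X \<times> Y" unfolding R_def by auto
  have corr: "correspondence X Y R"
    unfolding correspondence_def
  proof (intro conjI RXY)
    show "fst ` R = X"
    proof
      show "fst ` R \<subseteq> X" using RXY by auto
      show "X \<subseteq> fst ` R"
      proof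
        fix x assume "x \<in> X"
        then have "(x, f x) \<in> R" using R0R unfolding R0_def by blast
        then show "x \<in> fst ` R" by force
      qed
    qed
    show "snd ` R = Y"
    proof
      show "snd ` R \<subseteq> Y" using RXY by auto
      show "Y \<subseteq> snd ` R"
      proof
        fix y assume "y \<in> Y"
        then have "(g y, y) \<in> R" using R0R unfolding R0_def by blast
        then show "y \<in> snd ` R" by force
      qed
    qed
  qed
  have bound: "\<bar>dX x x' - dY y y'\<bar> \<le> G" if hR: "(x,y) \<in> R" "(x',y') \<in> R" for x y x' y'
  proof (rule field_le_epsilon)
    fix e :: real assume e: "0 < e"
    have xy: "x \<in> X" "y \<in> Y" "x' \<in> X" "y' \<in> Y" using hR RXY by auto
    have A1: "\<forall>e>0. \<exists>a b. (a,b) \<in> R0 \<and> dX x a < e \<and> dY y b < e"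
      using hR(1) unfolding R_def by simp
    have A2: "\<forall>e>0. \<exists>a b. (a,b) \<in> R0 \<and> dX x' a < e \<and> dY y' b < e"
      using hR(2) unfolding R_def by simp
    have e2: "e/4 > 0" using e by simp
    obtain a b where ab: "(a,b) \<in> R0" "dX x a < e/4" "dY y b < e/4"
      using A1[rule_format, OF e2] by blast
    obtain a' b' where ab': "(a',b') \<in> R0" "dX x' a' < e/4" "dY y' b' < e/4"
      using A2[rule_format, OF e2] by blast
    have abXY: "a \<in> X" "b \<in> Y" "a' \<in> X" "b' \<in> Y" using ab(1) ab'(1) R0XY by auto
    have t1: "dX x x' \<le> dX x a + dX a a' + dX a' x'"
      using MX.triangle[of x a x'] MX.triangle[of a a' x'] xy abXY by linarith
    have t2: "dX a a' \<le> dX a x + dX x x' + dX x' a'"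
      using MX.triangle[of a x a'] MX.triangle[of x x' a'] xy abXY by linarith
    have t3: "dY y y' \<le> dY y b + dY b b' + dY b' y'"
      using MY.triangle[of y b y'] MY.triangle[of b b' y'] xy abXY by linarith
    have t4: "dY b b' \<le> dY b y + dY y y' + dY y' b'"
      using MY.triangle[of b y b'] MY.triangle[of y y' b'] xy abXY by linarith
    have "\<bar>dX a a' - dY b b'\<bar> \<le> G" using R0b ab(1) ab'(1) by blast
    then show "\<bar>dX x x' - dY y y'\<bar> \<le> G + e"
      using t1 t2 t3 t4 ab ab' MX.commute[of x a] MX.commute[of x' a'] MY.commute[of y b] MY.commute[of y' b']
      by linarith
  qed
  have closed: "(x,y) \<in> R" if xX: "x \<in> X" "y \<in> Y"
    and H: "\<And>e. e > 0 \<Longrightarrow> \<exists>a b. (a,b) \<in> R \<and> dX x a < e \<and> dY y b < e" for x y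
  proof -
    have "\<exists>a b. (a,b) \<in> R0 \<and> dX x a < e \<and> dY y b < e" if e: "e > 0" for e
    proof -
      obtain a b where ab: "(a,b) \<in> R" "dX x a < e/2" "dY y b < e/2" using H[of "e/2"] e by auto
      have A1: "\<forall>e>0. \<exists>a' b'. (a',b') \<in> R0 \<and> dX a a' < e \<and> dY b b' < e"
        using ab(1) unfolding R_def by simp
      have e2: "e/2 > 0" using e by simp
      obtain a' b' where ab': "(a',b') \<in> R0" "dX a a' < e/2" "dY b b' < e/2"
        using A1[rule_format, OF e2] by blast
      have "a \<in> X" "b \<in> Y" "a' \<in> X" "b' \<in> Y" using ab(1) ab'(1) RXY R0XY by auto
      then have "dX x a' \<le> dX x a + dX a a'" "dY y b' \<le> dY y b + dY b b'"
        using MX.triangle[of x a a'] MY.triangle[of y b b'] xX by blast+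
      then show ?thesis using ab ab' by (intro exI[of _ a'] exI[of _ b']) auto
    qed
    then show ?thesis unfolding R_def using xX by auto
  qed
  show ?thesis using that[OF corr] bound closed unfolding G_def by blast
qed



lemma conv_lt:
  fixes t a b e :: real
  assumes "0 \<le> t" "t \<le> 1" "a < e" "b < e"
  shows "(1-t)*a + t*b < e"
proof (cases "t = 0")
  case True then show ?thesis using assms by simp
next
  case False
  then have "t*b < t*e" using assms by (intro mult_strict_left_mono) auto
  moreover have "(1-t)*a \<le> (1-t)*e" using assms by (intro mult_left_mono) auto
  ultimately show ?thesis by (simp add: algebra_simps)
qed

lemma conv_le:
  fixes t a b a' b' :: real
  assumes "0 \<le> t" "t \<le> 1" "a \<le> a'" "b \<le> b'"
  shows "(1-t)*a + t*b \<le> (1-t)*a' + t*b'"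
  using assms by (intro add_mono mult_left_mono) auto

lemma GH_via:
  assumes "A \<noteq> {}" "bnd A dA \<alpha>" "bnd B dB \<beta>" "u ` R = A" "v ` R = B"
    and H: "\<And>p q. p \<in> R \<Longrightarrow> q \<in> R \<Longrightarrow> \<bar>dA (u p) (u q) - dB (v p) (v q)\<bar> \<le> c"
  shows "GH_dist A dA B dB \<le> c / 2"
proof -
  define C where "C = (\<lambda>p. (u p, v p)) ` R"
  have corr: "correspondence A B C"
    unfolding correspondence_def C_def
  proof (intro conjI)
    show "(\<lambda>p. (u p, v p)) ` R \<subseteq> A \<times> B" using assms(4,5) by auto
    show "fst ` (\<lambda>p. (u p, v p)) ` R = A" using assms(4) by (simp add: image_comp o_def)
    show "snd ` (\<lambda>p. (u p, v p)) ` R = B" using assms(5) by (simp add: image_comp o_def)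
  qed
  have "distortion dA dB C \<le> c"
  proof (rule dis_least)
    show "C \<noteq> {}" using corr_ne[OF corr assms(1)] .
    fix x y x' y' assume "(x,y) \<in> C" "(x',y') \<in> C"
    then obtain p q where "p \<in> R" "q \<in> R" "x = u p" "y = v p" "x' = u q" "y' = v q"
      unfolding C_def by auto
    then show "\<bar>dA x x' - dB y y'\<bar> \<le> c" using H by simp
  qed
  then show ?thesis using GH_le[OF assms(1,2,3) corr] by linarith
qed



theorem mainTheorem3:
  fixes X :: "'a set" and dX :: "'a \<Rightarrow> 'a \<Rightarrow> real"
    and Y :: "'b set" and dY :: "'b \<Rightarrow> 'b \<Rightarrow> real"
  assumes "compact_metric_space X dX" and "compact_metric_space Y dY"
  shows "\<exists>(S :: real \<Rightarrow> ('a \<times> 'b) set) (D :: real \<Rightarrow> ('a \<times> 'b) \<Rightarrow> ('a \<times> 'b) \<Rightarrow> real).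
           (\<forall>t\<in>{0..1}. compact_metric_space (S t) (D t)) \<and>
           isometric (S 0) (D 0) X dX \<and> isometric (S 1) (D 1) Y dY \<and>
           (\<forall>t\<in>{0..1}. \<forall>e>0. \<exists>\<delta>>0. \<forall>s\<in>{0..1}.
              \<bar>s - t\<bar> < \<delta> \<longrightarrow> GH_dist (S s) (D s) (S t) (D t) < e) \<and>
           (\<forall>s\<in>{0..1}. \<forall>t\<in>{0..1}.
              GH_dist (S s) (D s) (S t) (D t) = \<bar>t - s\<bar> * GH_dist X dX Y dY)"
proof -
  note cX = assms(1) and cY = assms(2)
  interpret MX: Metric_space X dX using cX unfolding compact_metric_space_def by blast
  interpret MY: Metric_space Y dY using cY unfolding compact_metric_space_def by blast
  have Xne: "X \<noteq> {}" and Yne: "Y \<noteq> {}" using cX cY unfolding compact_metric_space_def by auto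
  obtain A where bA: "bnd X dX A" using cms_bnd[OF cX] by blast
  obtain B where bB: "bnd Y dY B" using cms_bnd[OF cY] by blast
  obtain x0 where x0: "x0 \<in> X" using Xne by blast
  obtain y0 where y0: "y0 \<in> Y" using Yne by blast
  have A0: "0 \<le> A" using bA x0 unfolding bnd_def by force
  have B0: "0 \<le> B" using bB y0 unfolding bnd_def by force
  define d where "d = GH_dist X dX Y dY"
  have d0: "0 \<le> d" unfolding d_def using GH_nonneg[OF Xne Yne bA bB] .
  obtain R where corr: "correspondence X Y R"
    and Rb: "\<And>x y x' y'. (x,y) \<in> R \<Longrightarrow> (x',y') \<in> R \<Longrightarrow> \<bar>dX x x' - dY y y'\<bar> \<le> 2 * d"
    and Rc: "\<And>x y. x \<in> X \<Longrightarrow> y \<in> Y \<Longrightarrow> (\<And>e. e > 0 \<Longrightarrow> \<exists>a b. (a,b) \<in> R \<and> dX x a < e \<and> dY y b < e) \<Longrightarrow> (x,y) \<in> R"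
    using optimal[OF cX cY] unfolding d_def by blast
  have RXY: "R \<subseteq> X \<times> Y" using corr unfolding correspondence_def by auto
  have Rne: "R \<noteq> {}" using corr_ne[OF corr Xne] .
  have Rb': "\<bar>dX (fst p) (fst q) - dY (snd p) (snd q)\<bar> \<le> 2 * d" if "p \<in> R" "q \<in> R" for p q
    using Rb[of "fst p" "snd p" "fst q" "snd q"] that by simp
  define \<pi> where "\<pi> t p = (if t = 1 then x0 else fst p, if t = 0 then y0 else snd p)" for t :: real and p :: "'a \<times> 'b"
  define S where "S t = \<pi> t ` R" for t
  define D where "D t p q = (1-t) * dX (fst p) (fst q) + t * dY (snd p) (snd q)" for t :: real and p q :: "'a \<times> 'b"
  have D\<pi>: "D t (\<pi> t p) (\<pi> t q) = (1-t) * dX (fst p) (fst q) + t * dY (snd p) (snd q)" for t p q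
    unfolding D_def \<pi>_def by simp
  have SXY: "S t \<subseteq> X \<times> Y" for t
    unfolding S_def \<pi>_def using RXY x0 y0 by auto
  have Sne: "S t \<noteq> {}" for t unfolding S_def using Rne by simp
  have bS: "bnd (S t) (D t) (A + B)" if t: "t \<in> {0..1}" for t
    unfolding bnd_def
  proof (intro ballI)
    fix p q assume "p \<in> S t" "q \<in> S t"
    then have pq: "fst p \<in> X" "fst q \<in> X" "snd p \<in> Y" "snd q \<in> Y" using SXY[of t] by (auto simp: mem_Times_iff)
    have "dX (fst p) (fst q) \<le> A" "dY (snd p) (snd q) \<le> B"
      using bA bB pq unfolding bnd_def by force+
    then have "D t p q \<le> (1-t)*A + t*B" unfolding D_def using t by (intro conv_le) auto
    also have "\<dots> \<le> A + B"
    proof -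
      have h1: "0 \<le> t*A" using A0 t by simp
      have h2: "t*B \<le> B" using B0 t mult_left_mono[of t 1 B] by (simp add: mult.commute)
      have "(1-t)*A + t*B = A - t*A + t*B" by (simp add: algebra_simps)
      then show ?thesis using h1 h2 by linarith
    qed
    finally have "D t p q \<le> A + B" .
    moreover have "0 \<le> D t p q" unfolding D_def using t by (auto intro!: add_nonneg_nonneg mult_nonneg_nonneg)
    ultimately show "\<bar>D t p q\<bar> \<le> A + B" by simp
  qed
  have MS: "Metric_space (S t) (D t)" if t: "t \<in> {0..1}" for t
  proof
    fix p q
    show "0 \<le> D t p q" unfolding D_def using t by (auto intro!: add_nonneg_nonneg mult_nonneg_nonneg)
    show "D t p q = D t q p" unfolding D_def by (simp add: MX.commute[of "fst p"] MY.commute[of "snd p"])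
  next
    fix p q assume p: "p \<in> S t" and q: "q \<in> S t"
    then obtain p' q' where p': "p' \<in> R" "p = \<pi> t p'" and q': "q' \<in> R" "q = \<pi> t q'"
      unfolding S_def by auto
    have pq: "fst p' \<in> X" "fst q' \<in> X" "snd p' \<in> Y" "snd q' \<in> Y" using p' q' RXY by auto
    show "D t p q = 0 \<longleftrightarrow> p = q"
    proof (cases "t = 0")
      case True then show ?thesis using p' q' pq by (simp add: D_def \<pi>_def prod_eq_iff)
    next
      case F0: False
      show ?thesis
      proof (cases "t = 1")
        case True then show ?thesis using p' q' pq by (simp add: D_def \<pi>_def prod_eq_iff)
      next
        case F1: False
        then have t01: "0 < t" "0 < 1 - t" using t F0 by auto
        have "D t p q = (1-t) * dX (fst p') (fst q') + t * dY (snd p') (snd q')"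
          using p' q' D\<pi> by simp
        moreover have "0 \<le> (1-t) * dX (fst p') (fst q')" "0 \<le> t * dY (snd p') (snd q')"
          using t01 by simp_all
        ultimately have "D t p q = 0 \<longleftrightarrow> (1-t) * dX (fst p') (fst q') = 0 \<and> t * dY (snd p') (snd q') = 0"
          by linarith
        also have "\<dots> \<longleftrightarrow> dX (fst p') (fst q') = 0 \<and> dY (snd p') (snd q') = 0"
          using t01 by simp
        also have "\<dots> \<longleftrightarrow> p' = q'" using pq by (simp add: prod_eq_iff)
        also have "\<dots> \<longleftrightarrow> p = q" using p' q' F0 F1 by (simp add: \<pi>_def)
        finally show ?thesis .
      qed
    qed
  next
    fix p q r assume "p \<in> S t" "q \<in> S t" "r \<in> S t"
    then have pq: "fst p \<in> X" "fst q \<in> X" "fst r \<in> X" "snd p \<in> Y" "snd q \<in> Y" "snd r \<in> Y"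
      using SXY[of t] by (auto simp: mem_Times_iff)
    have "D t p r \<le> (1-t) * (dX (fst p) (fst q) + dX (fst q) (fst r)) + t * (dY (snd p) (snd q) + dY (snd q) (snd r))"
      unfolding D_def using t pq MX.triangle MY.triangle by (intro conv_le) auto
    then show "D t p r \<le> D t p q + D t q r" unfolding D_def by (simp add: algebra_simps)
  qed
  have cms: "compact_metric_space (S t) (D t)" if t: "t \<in> {0..1}" for t
  proof -
    interpret M: Metric_space "S t" "D t" using MS[OF t] .
    have "compact_space M.mtopology"
      unfolding M.compact_space_sequentially
    proof (intro allI impI)
      fix \<sigma> :: "nat \<Rightarrow> 'a \<times> 'b" assume rs: "range \<sigma> \<subseteq> S t"
      have "\<forall>n. \<exists>p. p \<in> R \<and> \<sigma> n = \<pi> t p" using rs unfolding S_def by blast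
      then obtain r where r: "\<And>n. r n \<in> R" "\<And>n. \<sigma> n = \<pi> t (r n)" by metis
      have rXY: "fst (r n) \<in> X \<and> snd (r n) \<in> Y" for n using r(1)[of n] RXY by (metis mem_Times_iff subsetD)
      have "range (fst \<circ> r) \<subseteq> X" using rXY by auto
      then obtain x r1 where x: "x \<in> X" "strict_mono r1" "limitin MX.mtopology (fst \<circ> r \<circ> r1) x sequentially"
        using cX unfolding compact_metric_space_def MX.compact_space_sequentially by (metis comp_assoc)
      have "range (snd \<circ> r \<circ> r1) \<subseteq> Y" using rXY by auto
      then obtain y r2 where y: "y \<in> Y" "strict_mono r2" "limitin MY.mtopology (snd \<circ> r \<circ> r1 \<circ> r2) y sequentially"
        using cY unfolding compact_metric_space_def MY.compact_space_sequentially by blast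
      define k where "k = r1 \<circ> r2"
      have k: "strict_mono k" unfolding k_def using x(2) y(2) by (rule strict_mono_o)
      have "limitin MX.mtopology (fst \<circ> r \<circ> r1 \<circ> r2) x sequentially"
        by (rule limitin_subsequence[OF y(2) x(3)])
      then have lx: "\<forall>e>0. \<exists>N. \<forall>n\<ge>N. dX (fst (r (k n))) x < e"
        unfolding MX.limit_metric_sequentially k_def by (fastforce simp: o_def)
      have ly: "\<forall>e>0. \<exists>N. \<forall>n\<ge>N. dY (snd (r (k n))) y < e"
        using y(3) unfolding MY.limit_metric_sequentially k_def by (fastforce simp: o_def)
      have xyR: "(x,y) \<in> R"
      proof (rule Rc[OF x(1) y(1)])
        fix e :: real assume e: "e > 0"
        obtain N1 where N1: "\<forall>n\<ge>N1. dX (fst (r (k n))) x < e" using lx e by blast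
        obtain N2 where N2: "\<forall>n\<ge>N2. dY (snd (r (k n))) y < e" using ly e by blast
        let ?n = "max N1 N2"
        have "r (k ?n) \<in> R" using r(1) .
        moreover have "dX x (fst (r (k ?n))) < e" using N1 MX.commute by (metis max.cobounded1)
        moreover have "dY y (snd (r (k ?n))) < e" using N2 MY.commute by (metis max.cobounded2)
        ultimately show "\<exists>a b. (a,b) \<in> R \<and> dX x a < e \<and> dY y b < e"
          by (intro exI[of _ "fst (r (k ?n))"] exI[of _ "snd (r (k ?n))"]) simp
      qed
      have "limitin M.mtopology (\<sigma> \<circ> k) (\<pi> t (x,y)) sequentially"
        unfolding M.limit_metric_sequentially
      proof (intro conjI allI impI)
        show "\<pi> t (x,y) \<in> S t" unfolding S_def using xyR by blast
        fix e :: real assume e: "e > 0"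
        obtain N1 where N1: "\<forall>n\<ge>N1. dX (fst (r (k n))) x < e" using lx e by blast
        obtain N2 where N2: "\<forall>n\<ge>N2. dY (snd (r (k n))) y < e" using ly e by blast
        show "\<exists>N. \<forall>n\<ge>N. (\<sigma> \<circ> k) n \<in> S t \<and> D t ((\<sigma> \<circ> k) n) (\<pi> t (x, y)) < e"
        proof (intro exI[of _ "max N1 N2"] allI impI conjI)
          fix n assume n: "max N1 N2 \<le> n"
          show "(\<sigma> \<circ> k) n \<in> S t" using rs by auto
          have "D t ((\<sigma> \<circ> k) n) (\<pi> t (x, y)) = (1-t) * dX (fst (r (k n))) x + t * dY (snd (r (k n))) y"
            using r(2) D\<pi> by simp
          also have "\<dots> < e" using N1 N2 n t by (intro conv_lt) auto
          finally show "D t ((\<sigma> \<circ> k) n) (\<pi> t (x, y)) < e" .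
        qed
      qed
      then show "\<exists>l r. l \<in> S t \<and> strict_mono r \<and> limitin M.mtopology (\<sigma> \<circ> r) l sequentially"
        using k xyR unfolding S_def by blast
    qed
    then show ?thesis unfolding compact_metric_space_def using MS[OF t] Sne by blast
  qed
  have iso0: "isometric (S 0) (D 0) X dX"
    unfolding isometric_def
  proof (intro exI[of _ fst] conjI ballI)
    have S0: "S 0 = (\<lambda>p. (fst p, y0)) ` R" unfolding S_def \<pi>_def by simp
    show "bij_betw fst (S 0) X"
      unfolding bij_betw_def
    proof
      show "inj_on fst (S 0)" unfolding S0 inj_on_def by auto
      show "fst ` S 0 = X" unfolding S0 using corr unfolding correspondence_def by (simp add: image_comp o_def)
    qed
    fix p q assume "p \<in> S 0" "q \<in> S 0"
    show "dX (fst p) (fst q) = D 0 p q" unfolding D_def by simp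
  qed
  have iso1: "isometric (S 1) (D 1) Y dY"
    unfolding isometric_def
  proof (intro exI[of _ snd] conjI ballI)
    have S1: "S 1 = (\<lambda>p. (x0, snd p)) ` R" unfolding S_def \<pi>_def by simp
    show "bij_betw snd (S 1) Y"
      unfolding bij_betw_def
    proof
      show "inj_on snd (S 1)" unfolding S1 inj_on_def by auto
      show "snd ` S 1 = Y" unfolding S1 using corr unfolding correspondence_def by (simp add: image_comp o_def)
    qed
    fix p q assume "p \<in> S 1" "q \<in> S 1"
    show "dY (snd p) (snd q) = D 1 p q" unfolding D_def by simp
  qed
  have up: "GH_dist (S s) (D s) (S t) (D t) \<le> \<bar>t - s\<bar> * d" if s: "s \<in> {0..1}" and t: "t \<in> {0..1}" for s t
  proof -
    have "GH_dist (S s) (D s) (S t) (D t) \<le> \<bar>t - s\<bar> * (2 * d) / 2"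
    proof (rule GH_via[OF Sne bS[OF s] bS[OF t]])
      show "\<pi> s ` R = S s" "\<pi> t ` R = S t" unfolding S_def by simp_all
      fix p q assume pq: "p \<in> R" "q \<in> R"
      have "D s (\<pi> s p) (\<pi> s q) - D t (\<pi> t p) (\<pi> t q) = (t - s) * (dX (fst p) (fst q) - dY (snd p) (snd q))"
        unfolding D\<pi> by (simp add: algebra_simps)
      then have "\<bar>D s (\<pi> s p) (\<pi> s q) - D t (\<pi> t p) (\<pi> t q)\<bar> = \<bar>t - s\<bar> * \<bar>dX (fst p) (fst q) - dY (snd p) (snd q)\<bar>"
        by (simp add: abs_mult)
      also have "\<dots> \<le> \<bar>t - s\<bar> * (2 * d)" using Rb'[OF pq] by (intro mult_left_mono) auto
      finally show "\<bar>D s (\<pi> s p) (\<pi> s q) - D t (\<pi> t p) (\<pi> t q)\<bar> \<le> \<bar>t - s\<bar> * (2 * d)" .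
    qed
    then show ?thesis by simp
  qed
  have upX: "GH_dist X dX (S t) (D t) \<le> t * d" if t: "t \<in> {0..1}" for t
  proof -
    have "GH_dist X dX (S t) (D t) \<le> t * (2 * d) / 2"
    proof (rule GH_via[OF Xne bA bS[OF t]])
      show "fst ` R = X" using corr unfolding correspondence_def by simp
      show "\<pi> t ` R = S t" unfolding S_def by simp
      fix p q assume pq: "p \<in> R" "q \<in> R"
      have "dX (fst p) (fst q) - D t (\<pi> t p) (\<pi> t q) = t * (dX (fst p) (fst q) - dY (snd p) (snd q))"
        unfolding D\<pi> by (simp add: algebra_simps)
      then have "\<bar>dX (fst p) (fst q) - D t (\<pi> t p) (\<pi> t q)\<bar> = t * \<bar>dX (fst p) (fst q) - dY (snd p) (snd q)\<bar>"
        using t by (simp add: abs_mult)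
      also have "\<dots> \<le> t * (2 * d)" using Rb'[OF pq] t by (intro mult_left_mono) auto
      finally show "\<bar>dX (fst p) (fst q) - D t (\<pi> t p) (\<pi> t q)\<bar> \<le> t * (2 * d)" .
    qed
    then show ?thesis by simp
  qed
  have upY: "GH_dist (S t) (D t) Y dY \<le> (1 - t) * d" if t: "t \<in> {0..1}" for t
  proof -
    have "GH_dist (S t) (D t) Y dY \<le> (1 - t) * (2 * d) / 2"
    proof (rule GH_via[OF Sne bS[OF t] bB])
      show "snd ` R = Y" using corr unfolding correspondence_def by simp
      show "\<pi> t ` R = S t" unfolding S_def by simp
      fix p q assume pq: "p \<in> R" "q \<in> R"
      have "D t (\<pi> t p) (\<pi> t q) - dY (snd p) (snd q) = (1 - t) * (dX (fst p) (fst q) - dY (snd p) (snd q))"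
        unfolding D\<pi> by (simp add: algebra_simps)
      then have "\<bar>D t (\<pi> t p) (\<pi> t q) - dY (snd p) (snd q)\<bar> = (1 - t) * \<bar>dX (fst p) (fst q) - dY (snd p) (snd q)\<bar>"
        using t by (simp add: abs_mult)
      also have "\<dots> \<le> (1 - t) * (2 * d)" using Rb'[OF pq] t by (intro mult_left_mono) auto
      finally show "\<bar>D t (\<pi> t p) (\<pi> t q) - dY (snd p) (snd q)\<bar> \<le> (1 - t) * (2 * d)" .
    qed
    then show ?thesis by simp
  qed
  have low: "(t - s) * d \<le> GH_dist (S s) (D s) (S t) (D t)" if s: "s \<in> {0..1}" and t: "t \<in> {0..1}" for s t
  proof -
    have "d \<le> GH_dist X dX (S s) (D s) + GH_dist (S s) (D s) Y dY"
      unfolding d_def by (rule GH_tri[OF Xne Sne Yne bA bS[OF s] bB])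
    also have "GH_dist (S s) (D s) Y dY \<le> GH_dist (S s) (D s) (S t) (D t) + GH_dist (S t) (D t) Y dY"
      by (rule GH_tri[OF Sne Sne Yne bS[OF s] bS[OF t] bB])
    finally show ?thesis using upX[OF s] upY[OF t] by (simp add: algebra_simps)
  qed
  have eq: "GH_dist (S s) (D s) (S t) (D t) = \<bar>t - s\<bar> * d" if s: "s \<in> {0..1}" and t: "t \<in> {0..1}" for s t
  proof (cases "s \<le> t")
    case True
    then show ?thesis using up[OF s t] low[OF s t] by simp
  next
    case False
    have "(s - t) * d \<le> GH_dist (S s) (D s) (S t) (D t)"
      using low[OF t s] GH_sym[of "S t" "D t" "S s" "D s"] by simp
    then show ?thesis using up[OF s t] False by simp
  qed
  have cont: "\<forall>t\<in>{0..1}. \<forall>e>0. \<exists>\<delta>>0. \<forall>s\<in>{0..1}. \<bar>s - t\<bar> < \<delta> \<longrightarrow> GH_dist (S s) (D s) (S t) (D t) < e"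
  proof (intro ballI allI impI)
    fix t e :: real assume t: "t \<in> {0..1}" and e: "e > 0"
    show "\<exists>\<delta>>0. \<forall>s\<in>{0..1}. \<bar>s - t\<bar> < \<delta> \<longrightarrow> GH_dist (S s) (D s) (S t) (D t) < e"
    proof (intro exI[of _ "e / (d + 1)"] conjI ballI impI)
      show "0 < e / (d + 1)" using e d0 by simp
      fix s assume s: "s \<in> {0..1}" and sd: "\<bar>s - t\<bar> < e / (d + 1)"
      have "\<bar>t - s\<bar> * d \<le> \<bar>t - s\<bar> * (d + 1)" by (intro mult_left_mono) auto
      also have "\<dots> < e" using sd d0 by (simp add: field_simps abs_minus_commute)
      finally show "GH_dist (S s) (D s) (S t) (D t) < e" using eq[OF s t] by simp
    qed
  qed
  show ?thesis
    apply (rule exI[of _ S], rule exI[of _ D])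
    using cms iso0 iso1 cont eq unfolding d_def by blast
qed

end
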